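(* Let $\mathcal{H}$ be a hypergraph on a finite vertex set $V$ and let $p\in[0,1]$. Writing $\mu=\mu_p(\mathcal{H})$, $\Delta=\Delta_p(\mathcal{H})$ and $\Lambda=\min\{\mu,\mu^2/\Delta\}$ (with $\mu^2/\Delta=\infty$ if $\Delta=0$), we have \[ \Pr\big(\nu(\mathcal{H}[V_p])\le\Lambda/1000\big)\le\exp(-\Lambda/10). \]
   Context: $V_p$ denotes the random subset of $V$ containing each element independently with probability $p$. For $W\subseteq V$, $\mathcal{H}[W]=\{A\in\mathcal{H}: A\subseteq W\}$. $\nu(\cdot)$ is the matching number. $\mu_p(\mathcal{H})=\sum_{A\in\mathcal{H}}p^{|A|}$ and $\Delta_p(\mathcal{H})=\sum p^{|A\cup B|}$, the sum over unordered pairs $\{A,B\}$ of distinct edges of $\mathcal{H}$ with $A\cap B\neq\emptyset$. *)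

theory Defs
  imports "HOL-Probability.Probability"
begin

definition random_subset :: "'a set \<Rightarrow> real \<Rightarrow> 'a set pmf" where
  "random_subset V p = map_pmf (\<lambda>b. {v \<in> V. b v}) (Pi_pmf V False (\<lambda>_. bernoulli_pmf p))"

definition induced :: "'a set set \<Rightarrow> 'a set \<Rightarrow> 'a set set" where
  "induced H W = {A \<in> H. A \<subseteq> W}"

definition matching_number :: "'a set set \<Rightarrow> nat" where
  "matching_number H = Max {card M | M. M \<subseteq> H \<and> disjoint M}"

definition mu_p :: "real \<Rightarrow> 'a set set \<Rightarrow> real" where
  "mu_p p H = (\<Sum>A\<in>H. p ^ card A)"

definition Delta_p :: "real \<Rightarrow> 'a set set \<Rightarrow> real" where
  "Delta_p p H = (\<Sum>P\<in>{{A, B} | A B. A \<in> H \<and> B \<in> H \<and> A \<noteq> B \<and> A \<inter> B \<noteq> {}}.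
                    p ^ card (\<Union>P))"

definition Lambda_p :: "real \<Rightarrow> 'a set set \<Rightarrow> real" where
  "Lambda_p p H = (if Delta_p p H = 0 then mu_p p H
                   else min (mu_p p H) ((mu_p p H)\<^sup>2 / Delta_p p H))"

end

theory Submission
  imports Defs
begin

definition ex :: "real \<Rightarrow> 'a set \<Rightarrow> ('a set \<Rightarrow> real) \<Rightarrow> real" where
  "ex p V f = (\<Sum>W\<in>Pow V. p ^ card W * (1-p) ^ card (V - W) * f W)"

lemma ex_cong: "(\<And>W. W \<subseteq> V \<Longrightarrow> f W = g W) \<Longrightarrow> ex p V f = ex p V g"
  unfolding ex_def by (intro sum.cong) auto

lemma ex_insert:
  assumes "finite V" "v \<notin> V"
  shows "ex p (insert v V) f = p * ex p V (\<lambda>W. f (insert v W)) + (1-p) * ex p V f"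
proof -
  have disj: "Pow V \<inter> insert v ` Pow V = {}" using assms by auto
  have inj: "inj_on (insert v) (Pow V)" using assms by (auto simp: inj_on_def)
  have fin: "finite (Pow V)" using assms by simp
  have "ex p (insert v V) f = (\<Sum>W\<in>Pow V. p ^ card W * (1-p) ^ card (insert v V - W) * f W)
      + (\<Sum>W\<in>insert v ` Pow V. p ^ card W * (1-p) ^ card (insert v V - W) * f W)"
    unfolding ex_def Pow_insert using disj fin by (simp add: sum.union_disjoint)
  also have "(\<Sum>W\<in>Pow V. p ^ card W * (1-p) ^ card (insert v V - W) * f W)
     = (1-p) * ex p V f"
    unfolding ex_def sum_distrib_left
  proof (intro sum.cong refl)
    fix W assume "W \<in> Pow V"
    then have "insert v V - W = insert v (V - W)" "v \<notin> V - W" "finite (V - W)" using assms by auto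
    then show "p ^ card W * (1-p) ^ card (insert v V - W) * f W = (1-p) * (p ^ card W * (1-p) ^ card (V - W) * f W)"
      by simp
  qed
  also have "(\<Sum>W\<in>insert v ` Pow V. p ^ card W * (1-p) ^ card (insert v V - W) * f W)
     = p * ex p V (\<lambda>W. f (insert v W))"
    unfolding ex_def sum_distrib_left sum.reindex[OF inj] o_def
  proof (intro sum.cong refl)
    fix W assume "W \<in> Pow V"
    then have "insert v V - insert v W = V - W" "v \<notin> W" "finite W" using assms by (auto dest: finite_subset)
    then show "p ^ card (insert v W) * (1-p) ^ card (insert v V - insert v W) * f (insert v W) = p * (p ^ card W * (1-p) ^ card (V - W) * f (insert v W))"
      by simp
  qed
  finally show ?thesis by simp
qed

lemma ex_empty[simp]: "ex p {} f = f {}"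
  unfolding ex_def by simp

lemma ex_const: "finite V \<Longrightarrow> ex p V (\<lambda>_. c) = c"
  by (induction V rule: finite_induct) (simp_all add: ex_insert algebra_simps)

lemma ex_add: "ex p V (\<lambda>W. f W + g W) = ex p V f + ex p V g"
  unfolding ex_def by (simp add: algebra_simps sum.distrib)

lemma ex_cmult: "ex p V (\<lambda>W. c * f W) = c * ex p V f"
  unfolding ex_def by (simp add: algebra_simps sum_distrib_left)

lemma ex_minus: "ex p V (\<lambda>W. f W - g W) = ex p V f - ex p V g"
  unfolding ex_def by (simp add: algebra_simps sum_subtractf)

lemma ex_sum: "ex p V (\<lambda>W. \<Sum>i\<in>I. f i W) = (\<Sum>i\<in>I. ex p V (f i))"
  unfolding ex_def by (simp add: sum_distrib_left sum_distrib_right sum.swap[of _ I] algebra_simps)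

lemma ex_mono:
  assumes "0 \<le> p" "p \<le> 1" "\<And>W. W \<subseteq> V \<Longrightarrow> f W \<le> g W"
  shows "ex p V f \<le> ex p V g"
  unfolding ex_def using assms by (intro sum_mono mult_left_mono) auto

lemma ex_nonneg:
  assumes "0 \<le> p" "p \<le> 1" "\<And>W. W \<subseteq> V \<Longrightarrow> 0 \<le> f W"
  shows "0 \<le> ex p V f"
  using ex_mono[of p V "\<lambda>_. 0" f] assms unfolding ex_def by simp

definition monoV :: "'a set \<Rightarrow> ('a set \<Rightarrow> real) \<Rightarrow> bool" where
  "monoV V f \<longleftrightarrow> (\<forall>X Y. X \<subseteq> Y \<longrightarrow> Y \<subseteq> V \<longrightarrow> f X \<le> f Y)"

lemma monoV_ins1: "monoV (insert v V) f \<Longrightarrow> monoV V (\<lambda>W. f (insert v W))"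
  unfolding monoV_def
proof (intro allI impI)
  fix X Y assume a: "\<forall>X Y. X \<subseteq> Y \<longrightarrow> Y \<subseteq> insert v V \<longrightarrow> f X \<le> f Y" "X \<subseteq> Y" "Y \<subseteq> V"
  have "insert v X \<subseteq> insert v Y" "insert v Y \<subseteq> insert v V" using a(2,3) by auto
  then show "f (insert v X) \<le> f (insert v Y)" using a(1) by simp
qed

lemma monoV_ins0: "monoV (insert v V) f \<Longrightarrow> monoV V f"
  unfolding monoV_def
proof (intro allI impI)
  fix X Y assume a: "\<forall>X Y. X \<subseteq> Y \<longrightarrow> Y \<subseteq> insert v V \<longrightarrow> f X \<le> f Y" "X \<subseteq> Y" "Y \<subseteq> V"
  have "Y \<subseteq> insert v V" using a(3) by auto
  then show "f X \<le> f Y" using a(1,2) by simp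
qed

lemma monoV_ins: "monoV (insert v V) f \<Longrightarrow> W \<subseteq> V \<Longrightarrow> f W \<le> f (insert v W)"
  unfolding monoV_def
proof -
  assume a: "\<forall>X Y. X \<subseteq> Y \<longrightarrow> Y \<subseteq> insert v V \<longrightarrow> f X \<le> f Y" "W \<subseteq> V"
  have "W \<subseteq> insert v W" "insert v W \<subseteq> insert v V" using a(2) by auto
  then show "f W \<le> f (insert v W)" using a(1) by simp
qed

lemma harris:
  assumes "finite V" "0 \<le> p" "p \<le> 1" "monoV V f" "monoV V g"
  shows "ex p V f * ex p V g \<le> ex p V (\<lambda>W. f W * g W)"
  using assms(1,4,5)
proof (induction V arbitrary: f g rule: finite_induct)
  case empty then show ?case by simp
next
  case (insert v V)
  define f1 where "f1 = (\<lambda>W. f (insert v W))"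
  define g1 where "g1 = (\<lambda>W. g (insert v W))"
  have m1a: "monoV V f1" using insert.prems(1) unfolding f1_def by (rule monoV_ins1)
  have m1b: "monoV V g1" using insert.prems(2) unfolding g1_def by (rule monoV_ins1)
  have m1c: "monoV V f" using insert.prems(1) by (rule monoV_ins0)
  have m1d: "monoV V g" using insert.prems(2) by (rule monoV_ins0)
  note m1 = m1a m1b m1c m1d
  have pf1: "f W \<le> f1 W" if "W \<subseteq> V" for W
    using insert.prems(1) that unfolding f1_def by (rule monoV_ins)
  have pf2: "g W \<le> g1 W" if "W \<subseteq> V" for W
    using insert.prems(2) that unfolding g1_def by (rule monoV_ins)
  note pf = pf1 pf2
  have le: "ex p V f \<le> ex p V f1" "ex p V g \<le> ex p V g1"
    using pf assms by (auto intro!: ex_mono)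
  have IH1: "ex p V f1 * ex p V g1 \<le> ex p V (\<lambda>W. f1 W * g1 W)" using insert.IH m1 by blast
  have IH0: "ex p V f * ex p V g \<le> ex p V (\<lambda>W. f W * g W)" using insert.IH m1 by blast
  have "ex p (insert v V) f * ex p (insert v V) g
      = (p * ex p V f1 + (1-p) * ex p V f) * (p * ex p V g1 + (1-p) * ex p V g)"
    using insert.hyps by (simp add: ex_insert f1_def g1_def)
  also have "\<dots> = p * (ex p V f1 * ex p V g1) + (1-p) * (ex p V f * ex p V g)
       - p * (1-p) * ((ex p V f1 - ex p V f) * (ex p V g1 - ex p V g))"
    by (simp add: algebra_simps)
  also have "\<dots> \<le> p * (ex p V f1 * ex p V g1) + (1-p) * (ex p V f * ex p V g)"
    using le assms by (simp add: mult_nonneg_nonneg)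
  also have "\<dots> \<le> p * ex p V (\<lambda>W. f1 W * g1 W) + (1-p) * ex p V (\<lambda>W. f W * g W)"
    using IH1 IH0 assms by (intro add_mono mult_left_mono) auto
  also have "\<dots> = ex p (insert v V) (\<lambda>W. f W * g W)"
    using insert.hyps by (simp add: ex_insert f1_def g1_def)
  finally show ?case .
qed

lemma harris_neg:
  assumes "finite V" "0 \<le> p" "p \<le> 1" "monoV V f" "monoV V (\<lambda>W. - g W)"
  shows "ex p V (\<lambda>W. f W * g W) \<le> ex p V f * ex p V g"
proof -
  have "ex p V f * ex p V (\<lambda>W. - g W) \<le> ex p V (\<lambda>W. f W * (- g W))"
    by (rule harris[OF assms])
  moreover have "ex p V (\<lambda>W. - g W) = - ex p V g" using ex_cmult[of p V "-1" g] by simp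
  moreover have "ex p V (\<lambda>W. f W * (- g W)) = - ex p V (\<lambda>W. f W * g W)"
    using ex_cmult[of p V "-1" "\<lambda>W. f W * g W"] by simp
  ultimately show ?thesis by simp
qed

definition ind :: "bool \<Rightarrow> real" where "ind b = (if b then 1 else 0)"

lemma ind_simps[simp]: "ind True = 1" "ind False = 0" "0 \<le> ind b" "ind b \<le> 1"
  by (auto simp: ind_def)

lemma indep:
  assumes "finite V" "A \<subseteq> V" "\<And>W. g W = g (W - A)"
  shows "ex p V (\<lambda>W. ind (A \<subseteq> W) * g W) = p ^ card A * ex p V g"
proof -
  have "finite A" using assms finite_subset by blast
  then show ?thesis using assms
  proof (induction A arbitrary: V g rule: finite_induct)
    case empty then show ?case by simp
  next
    case (insert a A)
    define V' where "V' = V - {a}"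
    have V: "V = insert a V'" "a \<notin> V'" "finite V'" "A \<subseteq> V'"
      using insert V'_def by auto
    have ga: "g (insert a W) = g W" for W
      proof -
      have "insert a W - insert a A = W - insert a A" by auto
      then show ?thesis using insert.prems(3)[of "insert a W"] insert.prems(3)[of W] by simp
    qed
    have gA: "g W = g (W - A)" for W
      proof -
      have "W - A - insert a A = W - insert a A" by auto
      then show ?thesis using insert.prems(3)[of "W - A"] insert.prems(3)[of W] by simp
    qed
    have "ex p V (\<lambda>W. ind (insert a A \<subseteq> W) * g W)
        = p * ex p V' (\<lambda>W. ind (insert a A \<subseteq> insert a W) * g (insert a W))
          + (1-p) * ex p V' (\<lambda>W. ind (insert a A \<subseteq> W) * g W)"
      using V by (simp add: ex_insert)
    also have "ex p V' (\<lambda>W. ind (insert a A \<subseteq> W) * g W) = ex p V' (\<lambda>_. 0)"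
      using V by (intro ex_cong) (auto simp: ind_def)
    also have "ex p V' (\<lambda>W. ind (insert a A \<subseteq> insert a W) * g (insert a W))
       = ex p V' (\<lambda>W. ind (A \<subseteq> W) * g W)"
      using insert.hyps by (intro ex_cong) (auto simp: ga ind_def)
    also have "\<dots> = p ^ card A * ex p V' g"
      using insert.IH[of V' g] V gA by blast
    also have "ex p V g = ex p V' g"
      using V by (simp add: ex_insert ga algebra_simps)
    ultimately show ?case using V insert.hyps by (simp add: ex_const)
  qed
qed

lemma prob_present:
  assumes "finite V" "A \<subseteq> V"
  shows "ex p V (\<lambda>W. ind (A \<subseteq> W)) = p ^ card A"
  using indep[OF assms, of "\<lambda>_. 1" p] assms by (simp add: ex_const)

definition D2 :: "real \<Rightarrow> 'a set set \<Rightarrow> real" where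
  "D2 p S = (\<Sum>A\<in>S. \<Sum>B\<in>S. ind (A \<noteq> B \<and> A \<inter> B \<noteq> {}) * p ^ card (A \<union> B))"

lemma D2_insert:
  assumes "finite S" "A \<notin> S"
  shows "D2 p (insert A S) = D2 p S + 2 * (\<Sum>B\<in>{B\<in>S. A \<inter> B \<noteq> {}}. p ^ card (A \<union> B))"
proof -
  have e1: "(\<Sum>B\<in>S. ind (A \<noteq> B \<and> A \<inter> B \<noteq> {}) * p ^ card (A \<union> B)) = (\<Sum>B\<in>{B\<in>S. A \<inter> B \<noteq> {}}. p ^ card (A \<union> B))"
    using assms by (subst sum.inter_filter) (auto simp: ind_def intro!: sum.cong)
  have e2: "(\<Sum>B\<in>S. ind (B \<noteq> A \<and> B \<inter> A \<noteq> {}) * p ^ card (B \<union> A)) = (\<Sum>B\<in>{B\<in>S. A \<inter> B \<noteq> {}}. p ^ card (A \<union> B))"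
    using assms by (subst sum.inter_filter) (auto simp: ind_def Un_commute Int_commute intro!: sum.cong)
  have "D2 p (insert A S) = (\<Sum>B\<in>S. ind (A \<noteq> B \<and> A \<inter> B \<noteq> {}) * p ^ card (A \<union> B))
     + (\<Sum>C\<in>S. ind (C \<noteq> A \<and> C \<inter> A \<noteq> {}) * p ^ card (C \<union> A)
        + (\<Sum>B\<in>S. ind (C \<noteq> B \<and> C \<inter> B \<noteq> {}) * p ^ card (C \<union> B)))"
    unfolding D2_def using assms by (simp add: sum.insert)
  also have "\<dots> = D2 p S + 2 * (\<Sum>B\<in>{B\<in>S. A \<inter> B \<noteq> {}}. p ^ card (A \<union> B))"
    unfolding sum.distrib e1 e2 D2_def by simp
  finally show ?thesis .
qed

lemma janson:
  assumes "finite V" "0 \<le> p" "p \<le> 1" "finite S" "\<And>A. A \<in> S \<Longrightarrow> A \<subseteq> V"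
  shows "ex p V (\<lambda>W. ind (\<forall>B\<in>S. \<not> B \<subseteq> W)) \<le> exp (- mu_p p S + D2 p S / 2)"
  using assms(4,5)
proof (induction S rule: finite_induct)
  case empty then show ?case using assms by (simp add: ex_const D2_def mu_p_def)
next
  case (insert A S)
  define D where "D = (\<lambda>W. ind (\<forall>B\<in>S. \<not> B \<subseteq> W))"
  define S1 where "S1 = {B\<in>S. A \<inter> B \<noteq> {}}"
  define S2 where "S2 = {B\<in>S. A \<inter> B = {}}"
  define E where "E = (\<lambda>W. ind (\<forall>B\<in>S2. \<not> B \<subseteq> W))"
  define c where "c = p ^ card A - (\<Sum>B\<in>S1. p ^ card (A \<union> B))"
  have AV: "A \<subseteq> V" using insert by auto
  have S1fin: "finite S1" using insert.hyps unfolding S1_def by simp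
  have pw: "ind (A \<subseteq> W) * E W - (\<Sum>B\<in>S1. ind (A \<union> B \<subseteq> W) * E W) \<le> ind (A \<subseteq> W) * D W" for W
  proof (cases "A \<subseteq> W \<and> E W = 1")
    case True
    show ?thesis
    proof (cases "\<exists>B\<in>S1. B \<subseteq> W")
      case True
      then obtain B where B: "B \<in> S1" "B \<subseteq> W" by blast
      have "1 \<le> (\<Sum>B\<in>S1. ind (A \<union> B \<subseteq> W) * E W)"
        using sum_nonneg_leq_bound[of S1] \<open>A \<subseteq> W \<and> E W = 1\<close> B S1fin
        by (intro order.trans[OF _ member_le_sum[OF B(1)]]) (auto simp: E_def)
      moreover have "0 \<le> D W" by (simp add: D_def)
      moreover have "ind (A \<subseteq> W) * E W = 1" using \<open>A \<subseteq> W \<and> E W = 1\<close> by simp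
      moreover have "ind (A \<subseteq> W) * D W = D W" using \<open>A \<subseteq> W \<and> E W = 1\<close> by simp
      ultimately show ?thesis by linarith
    next
      case False
      then have "\<forall>B\<in>S. \<not> B \<subseteq> W" using True unfolding E_def S1_def S2_def ind_def
        by (auto split: if_splits)
      then show ?thesis using True by (simp add: D_def sum_nonneg)
    qed
  next
    case False
    then have "ind (A \<subseteq> W) * E W = 0" by (auto simp: ind_def E_def split: if_splits)
    moreover have "0 \<le> (\<Sum>B\<in>S1. ind (A \<union> B \<subseteq> W) * E W)" by (intro sum_nonneg) (auto simp: E_def)
    moreover have "0 \<le> ind (A \<subseteq> W) * D W" by (simp add: D_def)
    ultimately show ?thesis by linarith
  qed
  have Eindep: "E W = E (W - A)" for W
    unfolding E_def S2_def by (rule arg_cong[where f=ind]) blast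
  have exAE: "ex p V (\<lambda>W. ind (A \<subseteq> W) * E W) = p ^ card A * ex p V E"
    by (rule indep[OF assms(1) AV]) (rule Eindep)
  have monoE: "monoV V (\<lambda>W. - E W)"
    unfolding monoV_def E_def ind_def by (auto dest: subset_trans)
  have exABE: "ex p V (\<lambda>W. ind (A \<union> B \<subseteq> W) * E W) \<le> p ^ card (A \<union> B) * ex p V E" if "B \<in> S1" for B
  proof -
    have BV: "A \<union> B \<subseteq> V" using that insert AV unfolding S1_def by auto
    have "monoV V (\<lambda>W. ind (A \<union> B \<subseteq> W))" unfolding monoV_def ind_def by auto
    then have "ex p V (\<lambda>W. ind (A \<union> B \<subseteq> W) * E W) \<le> ex p V (\<lambda>W. ind (A \<union> B \<subseteq> W)) * ex p V E"
      using harris_neg[OF assms(1-3) _ monoE] by blast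
    then show ?thesis using prob_present[OF assms(1) BV] by simp
  qed
  have "ex p V (\<lambda>W. ind (A \<subseteq> W) * E W - (\<Sum>B\<in>S1. ind (A \<union> B \<subseteq> W) * E W))
      \<le> ex p V (\<lambda>W. ind (A \<subseteq> W) * D W)"
    using pw assms by (intro ex_mono) auto
  then have low1: "c * ex p V E \<le> ex p V (\<lambda>W. ind (A \<subseteq> W) * D W)"
    unfolding ex_minus ex_sum exAE c_def left_diff_distrib sum_distrib_right
    using sum_mono[of S1 "\<lambda>B. ex p V (\<lambda>W. ind (A \<union> B \<subseteq> W) * E W)" "\<lambda>B. p ^ card (A \<union> B) * ex p V E", OF exABE] by linarith
  have DE: "ex p V D \<le> ex p V E"
    using assms by (intro ex_mono) (auto simp: D_def E_def S2_def ind_def)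
  have D0: "0 \<le> ex p V D" using assms by (intro ex_nonneg) (auto simp: D_def)
  have low2: "c * ex p V D \<le> ex p V (\<lambda>W. ind (A \<subseteq> W) * D W)"
  proof (cases "c \<ge> 0")
    case True then show ?thesis using low1 DE mult_left_mono by (meson order_trans)
  next
    case False
    have "0 \<le> ex p V (\<lambda>W. ind (A \<subseteq> W) * D W)" using assms by (intro ex_nonneg) (auto simp: D_def)
    moreover have "c * ex p V D \<le> 0" using False D0 by (simp add: mult_nonpos_nonneg)
    ultimately show ?thesis by linarith
  qed
  have "ex p V (\<lambda>W. ind (\<forall>B\<in>insert A S. \<not> B \<subseteq> W)) = ex p V (\<lambda>W. D W - ind (A \<subseteq> W) * D W)"
    by (intro ex_cong) (auto simp: D_def ind_def)
  also have "\<dots> \<le> (1 - c) * ex p V D" using low2 unfolding ex_minus by (simp add: algebra_simps)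
  also have "\<dots> \<le> exp (- c) * ex p V D"
    using D0 by (intro mult_right_mono) (use exp_ge_add_one_self[of "-c"] in auto)
  also have "\<dots> \<le> exp (- c) * exp (- mu_p p S + D2 p S / 2)"
    using insert by (intro mult_left_mono) (auto simp: D_def)
  also have "\<dots> = exp (- mu_p p (insert A S) + D2 p (insert A S) / 2)"
    using insert.hyps by (simp add: D2_insert mu_p_def c_def S1_def exp_add[symmetric] algebra_simps)
  finally show ?case .
qed

lemma subset_sum_bound:
  fixes x :: "'b \<Rightarrow> real"
  assumes "finite G" "\<And>A. A \<in> G \<Longrightarrow> 0 \<le> x A" "0 < s" "s \<le> 1" "0 \<le> t"
  shows "(\<Sum>M\<in>{M. M \<subseteq> G \<and> real (card M) \<le> t}. \<Prod>A\<in>M. x A) \<le> s powr (- t) * exp (s * (\<Sum>A\<in>G. x A))"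
proof -
  have "(\<Sum>M\<in>{M. M \<subseteq> G \<and> real (card M) \<le> t}. \<Prod>A\<in>M. x A)
      \<le> (\<Sum>M\<in>{M. M \<subseteq> G \<and> real (card M) \<le> t}. s powr (real (card M) - t) * (\<Prod>A\<in>M. x A))"
  proof (intro sum_mono)
    fix M assume M: "M \<in> {M. M \<subseteq> G \<and> real (card M) \<le> t}"
    have "real (card M) - t \<le> 0" using M by auto
    then have "1 \<le> s powr (real (card M) - t)" using assms by (metis powr_mono2' powr_one_eq_one less_imp_le)
    moreover have "0 \<le> (\<Prod>A\<in>M. x A)" using M assms by (intro prod_nonneg) auto
    ultimately show "(\<Prod>A\<in>M. x A) \<le> s powr (real (card M) - t) * (\<Prod>A\<in>M. x A)"
      by (metis mult_right_mono mult_1)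
  qed
  also have "\<dots> \<le> (\<Sum>M\<in>Pow G. s powr (real (card M) - t) * (\<Prod>A\<in>M. x A))"
    using assms by (intro sum_mono2) (auto intro!: mult_nonneg_nonneg prod_nonneg)
  also have "\<dots> = s powr (- t) * (\<Sum>M\<in>Pow G. (\<Prod>A\<in>M. s * x A) * (\<Prod>A\<in>G - M. 1))"
    unfolding sum_distrib_left
  proof (intro sum.cong refl)
    fix M assume "M \<in> Pow G"
    have "s powr (real (card M) - t) = s powr (- t) * s ^ card M"
      using assms by (simp add: powr_diff powr_realpow powr_minus divide_inverse)
    then show "s powr (real (card M) - t) * (\<Prod>A\<in>M. x A) = s powr (- t) * ((\<Prod>A\<in>M. s * x A) * (\<Prod>A\<in>G - M. 1))"
      by (simp add: prod.distrib)
  qed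
  also have "\<dots> = s powr (- t) * (\<Prod>A\<in>G. s * x A + 1)"
    using prod_add[OF assms(1), of "\<lambda>A. s * x A" "\<lambda>_. 1"] by simp
  also have "\<dots> \<le> s powr (- t) * (\<Prod>A\<in>G. exp (s * x A))"
    using assms by (intro mult_left_mono prod_mono) (auto simp: add.commute)
  also have "\<dots> = s powr (- t) * exp (s * (\<Sum>A\<in>G. x A))"
    using assms by (simp add: exp_sum sum_distrib_left)
  finally show ?thesis .
qed

lemma D2_nonneg: "0 \<le> p \<Longrightarrow> 0 \<le> D2 p S"
  unfolding D2_def by (intro sum_nonneg mult_nonneg_nonneg) auto

lemma D2_mono:
  assumes "S \<subseteq> G" "finite G" "0 \<le> p"
  shows "D2 p S \<le> D2 p G"
proof -
  have "D2 p S \<le> (\<Sum>A\<in>S. \<Sum>B\<in>G. ind (A \<noteq> B \<and> A \<inter> B \<noteq> {}) * p ^ card (A \<union> B))"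
    unfolding D2_def using assms
    by (intro sum_mono sum_mono2) (auto intro!: mult_nonneg_nonneg dest: finite_subset)
  also have "\<dots> \<le> D2 p G"
    unfolding D2_def using assms
    by (intro sum_mono2 sum_nonneg) (auto intro!: mult_nonneg_nonneg)
  finally show ?thesis .
qed

lemma matching_le:
  assumes "finite X" "M \<subseteq> X" "disjoint M"
  shows "card M \<le> matching_number X"
proof -
  have "{card M |M. M \<subseteq> X \<and> disjoint M} \<subseteq> card ` Pow X" by auto
  then have "finite {card M |M. M \<subseteq> X \<and> disjoint M}" using assms(1) finite_subset by blast
  then show ?thesis unfolding matching_number_def using assms by (intro Max_ge) auto
qed

lemma cover:
  assumes "finite H" "\<And>A. A \<in> H \<Longrightarrow> A \<noteq> {}" "G \<subseteq> H"
    and "real (matching_number (induced H W)) \<le> t"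
  shows "\<exists>M. M \<subseteq> G \<and> disjoint M \<and> real (card M) \<le> t \<and> \<Union>M \<subseteq> W
           \<and> (\<forall>B\<in>{B\<in>G. \<forall>A\<in>M. A \<inter> B = {}}. \<not> B \<subseteq> W)"
proof -
  define P where "P = induced G W"
  define K where "K = {M. M \<subseteq> P \<and> disjoint M}"
  have finG: "finite G" using assms(1,3) by (rule finite_subset[rotated])
  have finP: "finite P" unfolding P_def induced_def using finG by simp
  have "K \<subseteq> Pow P" unfolding K_def by blast
  then have finK: "finite K" using finP finite_subset by blast
  have "{} \<in> K" unfolding K_def by (simp add: disjoint_def)
  then have Kne: "K \<noteq> {}" by blast
  define m where "m = Max (card ` K)"
  have "m \<in> card ` K" unfolding m_def using finK Kne by (intro Max_in) auto
  then obtain M where M: "M \<in> K" "card M = m" by blast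
  have maxM: "card M' \<le> card M" if "M' \<in> K" for M'
    using M(2) finK that unfolding m_def by (simp add: Max_ge)
  have MP: "M \<subseteq> P" "disjoint M" using M unfolding K_def by auto
  have PH: "P \<subseteq> induced H W" unfolding P_def induced_def using assms(3) by auto
  have finIH: "finite (induced H W)" unfolding induced_def using assms(1) by simp
  have "card M \<le> matching_number (induced H W)"
    using matching_le[OF finIH _ MP(2)] MP(1) PH by blast
  then have ct: "real (card M) \<le> t" using assms(4) by linarith
  have sub: "M \<subseteq> G" "\<Union>M \<subseteq> W" using MP unfolding P_def induced_def by auto
  have absent: "\<not> B \<subseteq> W" if B: "B \<in> G" "\<forall>A\<in>M. A \<inter> B = {}" for B
  proof
    assume BW: "B \<subseteq> W"
    have Bne: "B \<noteq> {}" using assms(2,3) B(1) by (simp add: subset_iff)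
    have BM: "B \<notin> M" using B Bne by auto
    have "insert B M \<in> K" unfolding K_def
    proof (intro CollectI conjI)
      show "insert B M \<subseteq> P" using MP B BW unfolding P_def induced_def by auto
      show "disjoint (insert B M)" using MP(2) B unfolding disjoint_def pairwise_insert disjnt_def
        by (simp add: Int_commute)
    qed
    moreover have "finite M" using finP MP(1) finite_subset by blast
    then have "card (insert B M) = card M + 1"
      using BM by simp
    ultimately show False using maxM[of "insert B M"] by linarith
  qed
  show ?thesis
    by (rule exI[of _ M]) (use sub MP(2) ct absent in simp)
qed

lemma ind_mult: "ind b * x = (if b then x else 0)" by (simp add: ind_def)

lemma mu_loss:
  assumes "finite G" "M \<subseteq> G" "0 \<le> p"
  shows "mu_p p G \<le> mu_p p {B\<in>G. \<forall>A\<in>M. A \<inter> B = {}} + (\<Sum>A\<in>M. \<Sum>B\<in>{B\<in>G. A \<inter> B \<noteq> {}}. p ^ card B)"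
proof -
  define S where "S = {B\<in>G. \<forall>A\<in>M. A \<inter> B = {}}"
  have finM: "finite M" using assms finite_subset by blast
  have "mu_p p G = mu_p p S + (\<Sum>B\<in>G - S. p ^ card B)"
    unfolding mu_p_def using assms by (subst sum.subset_diff[of S G]) (auto simp: S_def)
  also have "(\<Sum>B\<in>G - S. p ^ card B) \<le> (\<Sum>B\<in>G - S. \<Sum>A\<in>M. ind (A \<inter> B \<noteq> {}) * p ^ card B)"
  proof (intro sum_mono)
    fix B assume "B \<in> G - S"
    then obtain A where A: "A \<in> M" "A \<inter> B \<noteq> {}" unfolding S_def by blast
    have "p ^ card B = ind (A \<inter> B \<noteq> {}) * p ^ card B" using A by simp
    also have "\<dots> \<le> (\<Sum>A\<in>M. ind (A \<inter> B \<noteq> {}) * p ^ card B)"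
      by (rule member_le_sum[OF A(1)]) (use assms finM in auto)
    finally show "p ^ card B \<le> (\<Sum>A\<in>M. ind (A \<inter> B \<noteq> {}) * p ^ card B)" .
  qed
  also have "\<dots> \<le> (\<Sum>B\<in>G. \<Sum>A\<in>M. ind (A \<inter> B \<noteq> {}) * p ^ card B)"
    using assms by (intro sum_mono2 sum_nonneg) auto
  also have "\<dots> = (\<Sum>A\<in>M. \<Sum>B\<in>G. ind (A \<inter> B \<noteq> {}) * p ^ card B)"
    by (rule sum.swap)
  also have "\<dots> = (\<Sum>A\<in>M. \<Sum>B\<in>{B\<in>G. A \<inter> B \<noteq> {}}. p ^ card B)"
  proof (rule sum.cong[OF refl])
    fix A assume "A \<in> M"
    show "(\<Sum>B\<in>G. ind (A \<inter> B \<noteq> {}) * p ^ card B) = (\<Sum>B\<in>{B\<in>G. A \<inter> B \<noteq> {}}. p ^ card B)"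
      using assms(1) by (simp add: sum.inter_filter ind_mult)
  qed
  finally show ?thesis unfolding S_def by simp
qed

lemma union_bound:
  assumes V: "finite V" and p: "0 \<le> p" "p \<le> 1" and H: "finite H" "\<And>A. A \<in> H \<Longrightarrow> A \<subseteq> V \<and> A \<noteq> {}"
    and G: "G \<subseteq> H"
    and kap: "\<And>A. A \<in> G \<Longrightarrow> (\<Sum>B\<in>{B\<in>G. A \<inter> B \<noteq> {}}. p ^ card B) \<le> kap"
    and s: "0 < s" "s \<le> 1" and t: "0 \<le> t"
  shows "ex p V (\<lambda>W. ind (real (matching_number (induced H W)) \<le> t))
     \<le> exp (- mu_p p G + D2 p G / 2) * (s powr (- t) * exp (s * (exp kap * mu_p p G)))"
proof -
  define N where "N = (\<lambda>A. \<Sum>B\<in>{B\<in>G. A \<inter> B \<noteq> {}}. p ^ card B)"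
  define SM where "SM = (\<lambda>M. {B\<in>G. \<forall>A\<in>M. A \<inter> B = {}})"
  define Mat where "Mat = {M. M \<subseteq> G \<and> disjoint M \<and> real (card M) \<le> t}"
  define F where "F = (\<lambda>M W. ind (\<Union>M \<subseteq> W) * ind (\<forall>B\<in>SM M. \<not> B \<subseteq> W))"
  have finG: "finite G" using H(1) G by (rule finite_subset[rotated])
  have GV: "A \<subseteq> V" "A \<noteq> {}" if "A \<in> G" for A using H(2) G that by auto
  have "Mat \<subseteq> Pow G" unfolding Mat_def by blast
  then have finMat: "finite Mat" using finG finite_subset by blast
  have Fnn: "0 \<le> F M W" for M W unfolding F_def by simp
  have pw: "ind (real (matching_number (induced H W)) \<le> t) \<le> (\<Sum>M\<in>Mat. F M W)" for W
  proof (cases "real (matching_number (induced H W)) \<le> t")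
    case True
    have "\<And>A. A \<in> H \<Longrightarrow> A \<noteq> {}" using H(2) by blast
    from cover[OF H(1) this G True] obtain M where M: "M \<subseteq> G" "disjoint M" "real (card M) \<le> t" "\<Union>M \<subseteq> W"
      "\<forall>B\<in>{B\<in>G. \<forall>A\<in>M. A \<inter> B = {}}. \<not> B \<subseteq> W" by blast
    have "M \<in> Mat" using M unfolding Mat_def by blast
    moreover have "F M W = 1" using M unfolding F_def SM_def by simp
    ultimately have "1 \<le> (\<Sum>M\<in>Mat. F M W)"
      using member_le_sum[of M Mat "\<lambda>M. F M W"] finMat Fnn by simp
    then show ?thesis using True by simp
  next
    case False then show ?thesis using Fnn by (simp add: sum_nonneg)
  qed
  have step: "ex p V (F M) \<le> exp (- mu_p p G + D2 p G / 2) * (\<Prod>A\<in>M. p ^ card A * exp (N A))"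
    if M: "M \<in> Mat" for M
  proof -
    have MG: "M \<subseteq> G" "disjoint M" using M unfolding Mat_def by auto
    have finM: "finite M" using finG MG finite_subset by blast
    have UV: "\<Union>M \<subseteq> V" using MG GV by blast
    have SMG: "SM M \<subseteq> G" unfolding SM_def by auto
    have finSM: "finite (SM M)" using finG SMG finite_subset by blast
    have m1: "monoV V (\<lambda>W. ind (\<Union>M \<subseteq> W))" unfolding monoV_def ind_def by auto
    have m2: "monoV V (\<lambda>W. - ind (\<forall>B\<in>SM M. \<not> B \<subseteq> W))" unfolding monoV_def ind_def
      by (auto dest: subset_trans)
    have "ex p V (F M) \<le> ex p V (\<lambda>W. ind (\<Union>M \<subseteq> W)) * ex p V (\<lambda>W. ind (\<forall>B\<in>SM M. \<not> B \<subseteq> W))"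
      unfolding F_def by (rule harris_neg[OF V p m1 m2])
    also have "ex p V (\<lambda>W. ind (\<Union>M \<subseteq> W)) = p ^ card (\<Union>M)" by (rule prob_present[OF V UV])
    also have "card (\<Union>M) = (\<Sum>A\<in>M. card A)"
    proof (rule card_Union_disjoint)
      show "disjoint M" using MG(2) .
      fix A assume "A \<in> M" then show "finite A" using MG GV finite_subset[OF _ V] by blast
    qed
    also have "p ^ (\<Sum>A\<in>M. card A) = (\<Prod>A\<in>M. p ^ card A)" by (rule power_sum)
    also have "ex p V (\<lambda>W. ind (\<forall>B\<in>SM M. \<not> B \<subseteq> W)) \<le> exp (- mu_p p (SM M) + D2 p (SM M) / 2)"
      using SMG GV by (intro janson[OF V p finSM]) auto
    also have "\<dots> \<le> exp (- mu_p p G + D2 p G / 2 + (\<Sum>A\<in>M. N A))"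
    proof -
      have "mu_p p G \<le> mu_p p (SM M) + (\<Sum>A\<in>M. N A)"
        unfolding SM_def N_def by (rule mu_loss[OF finG MG(1) p(1)])
      moreover have "D2 p (SM M) \<le> D2 p G" by (rule D2_mono[OF SMG finG p(1)])
      ultimately show ?thesis by simp
    qed
    also have "\<dots> = exp (- mu_p p G + D2 p G / 2) * (\<Prod>A\<in>M. exp (N A))"
      using finM by (simp add: exp_add exp_sum)
    finally have "ex p V (F M) \<le> (\<Prod>A\<in>M. p ^ card A) * (exp (- mu_p p G + D2 p G / 2) * (\<Prod>A\<in>M. exp (N A)))"
      using p by (simp add: mult_left_mono prod_nonneg)
    then show ?thesis by (simp add: prod.distrib algebra_simps)
  qed
  have "ex p V (\<lambda>W. ind (real (matching_number (induced H W)) \<le> t)) \<le> ex p V (\<lambda>W. \<Sum>M\<in>Mat. F M W)"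
    using pw p by (intro ex_mono) auto
  also have "\<dots> = (\<Sum>M\<in>Mat. ex p V (F M))" by (rule ex_sum)
  also have "\<dots> \<le> (\<Sum>M\<in>Mat. exp (- mu_p p G + D2 p G / 2) * (\<Prod>A\<in>M. p ^ card A * exp (N A)))"
    using step by (rule sum_mono)
  also have "\<dots> = exp (- mu_p p G + D2 p G / 2) * (\<Sum>M\<in>Mat. \<Prod>A\<in>M. p ^ card A * exp (N A))"
    by (simp add: sum_distrib_left)
  also have "(\<Sum>M\<in>Mat. \<Prod>A\<in>M. p ^ card A * exp (N A)) \<le> (\<Sum>M\<in>{M. M \<subseteq> G \<and> real (card M) \<le> t}. \<Prod>A\<in>M. p ^ card A * exp (N A))"
    using finG p by (intro sum_mono2) (auto simp: Mat_def intro!: prod_nonneg)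
  also have "\<dots> \<le> s powr (- t) * exp (s * (\<Sum>A\<in>G. p ^ card A * exp (N A)))"
    using p by (intro subset_sum_bound[OF finG _ s t]) auto
  also have "(\<Sum>A\<in>G. p ^ card A * exp (N A)) \<le> (\<Sum>A\<in>G. exp kap * p ^ card A)"
  proof (rule sum_mono)
    fix A assume "A \<in> G"
    then have "exp (N A) \<le> exp kap" using kap unfolding N_def by simp
    then show "p ^ card A * exp (N A) \<le> exp kap * p ^ card A"
      using p by (simp add: mult.commute mult_right_mono)
  qed
  also have "\<dots> = exp kap * mu_p p G" by (simp add: mu_p_def sum_distrib_left)
  finally show ?thesis using s by (simp add: mult_left_mono)
qed

lemma D2_Delta:
  assumes "finite H"
  shows "D2 p H = 2 * Delta_p p H"
proof -
  define Od where "Od = {x \<in> H \<times> H. fst x \<noteq> snd x \<and> fst x \<inter> snd x \<noteq> {}}"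
  define h where "h = (\<lambda>x::'a set \<times> 'a set. {fst x, snd x})"
  define f where "f = (\<lambda>P::'a set set. p ^ card (\<Union>P))"
  have finO: "finite Od" unfolding Od_def using assms by simp
  have "D2 p H = (\<Sum>x\<in>H \<times> H. ind (fst x \<noteq> snd x \<and> fst x \<inter> snd x \<noteq> {}) * p ^ card (fst x \<union> snd x))"
    unfolding D2_def by (simp add: sum.cartesian_product case_prod_beta)
  also have "\<dots> = (\<Sum>x\<in>Od. f (h x))"
    unfolding Od_def using assms by (simp add: sum.inter_filter ind_mult f_def h_def)
  also have "\<dots> = (\<Sum>P\<in>h ` Od. \<Sum>x\<in>{x. x \<in> Od \<and> h x = P}. f (h x))"
    by (rule sum.image_gen[OF finO])
  also have "\<dots> = (\<Sum>P\<in>h ` Od. 2 * f P)"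
  proof (rule sum.cong[OF refl])
    fix P assume "P \<in> h ` Od"
    then obtain A B where AB: "(A, B) \<in> Od" "P = {A, B}" unfolding h_def by auto
    have fib: "{x. x \<in> Od \<and> h x = P} = {(A, B), (B, A)}"
      using AB unfolding Od_def h_def by (auto simp: doubleton_eq_iff Int_commute)
    have "A \<noteq> B" using AB unfolding Od_def by auto
    then have "card {(A, B), (B, A)} = 2" by simp
    then show "(\<Sum>x\<in>{x. x \<in> Od \<and> h x = P}. f (h x)) = 2 * f P"
      unfolding fib using AB \<open>A \<noteq> B\<close> by (simp add: h_def insert_commute)
  qed
  also have "h ` Od = {{A, B} | A B. A \<in> H \<and> B \<in> H \<and> A \<noteq> B \<and> A \<inter> B \<noteq> {}}"
  proof
    show "h ` Od \<subseteq> {{A, B} | A B. A \<in> H \<and> B \<in> H \<and> A \<noteq> B \<and> A \<inter> B \<noteq> {}}"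
    proof (rule image_subsetI)
      fix x assume "x \<in> Od"
      then have "fst x \<in> H \<and> snd x \<in> H \<and> fst x \<noteq> snd x \<and> fst x \<inter> snd x \<noteq> {}"
        unfolding Od_def by auto
      then show "h x \<in> {{A, B} | A B. A \<in> H \<and> B \<in> H \<and> A \<noteq> B \<and> A \<inter> B \<noteq> {}}"
        unfolding h_def by (intro CollectI exI[of _ "fst x"] exI[of _ "snd x"]) simp
    qed
  next
    show "{{A, B} | A B. A \<in> H \<and> B \<in> H \<and> A \<noteq> B \<and> A \<inter> B \<noteq> {}} \<subseteq> h ` Od"
    proof
      fix P assume "P \<in> {{A, B} | A B. A \<in> H \<and> B \<in> H \<and> A \<noteq> B \<and> A \<inter> B \<noteq> {}}"
      then obtain A B where "P = {A, B}" "A \<in> H" "B \<in> H" "A \<noteq> B" "A \<inter> B \<noteq> {}" by blast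
      then have "(A, B) \<in> Od" "P = h (A, B)" unfolding Od_def h_def by auto
      then show "P \<in> h ` Od" by blast
    qed
  qed
  finally show ?thesis unfolding Delta_p_def f_def by (simp add: sum_distrib_left)
qed

lemma mu_as_sum:
  assumes "finite H" "G \<subseteq> H"
  shows "mu_p p G = (\<Sum>A\<in>H. ind ({A} \<subseteq> G) * p ^ card A)"
proof -
  have "mu_p p G = (\<Sum>A\<in>H \<inter> G. p ^ card A)" unfolding mu_p_def using assms
    by (simp add: Int_absorb1)
  also have "\<dots> = (\<Sum>A\<in>H. ind ({A} \<subseteq> G) * p ^ card A)"
    using assms by (simp add: sum.inter_restrict ind_mult)
  finally show ?thesis .
qed

lemma D2_as_sum:
  assumes "finite H" "G \<subseteq> H"
  shows "D2 p G = (\<Sum>A\<in>H. \<Sum>B\<in>H. ind ({A, B} \<subseteq> G) * (ind (A \<noteq> B \<and> A \<inter> B \<noteq> {}) * p ^ card (A \<union> B)))"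
proof -
  have fG: "finite G" using assms finite_subset by blast
  have "D2 p G = (\<Sum>A\<in>H \<inter> G. \<Sum>B\<in>H \<inter> G. ind (A \<noteq> B \<and> A \<inter> B \<noteq> {}) * p ^ card (A \<union> B))"
    unfolding D2_def using assms by (simp add: Int_absorb1)
  also have "\<dots> = (\<Sum>A\<in>H. if A \<in> G then \<Sum>B\<in>H. if B \<in> G then ind (A \<noteq> B \<and> A \<inter> B \<noteq> {}) * p ^ card (A \<union> B) else 0 else 0)"
    using assms by (simp add: sum.inter_restrict)
  also have "\<dots> = (\<Sum>A\<in>H. \<Sum>B\<in>H. ind ({A, B} \<subseteq> G) * (ind (A \<noteq> B \<and> A \<inter> B \<noteq> {}) * p ^ card (A \<union> B)))"
  proof (rule sum.cong[OF refl])
    fix A assume "A \<in> H"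
    show "(if A \<in> G then \<Sum>B\<in>H. if B \<in> G then ind (A \<noteq> B \<and> A \<inter> B \<noteq> {}) * p ^ card (A \<union> B) else 0 else 0)
       = (\<Sum>B\<in>H. ind ({A, B} \<subseteq> G) * (ind (A \<noteq> B \<and> A \<inter> B \<noteq> {}) * p ^ card (A \<union> B)))"
    proof (cases "A \<in> G")
      case True
      have "\<And>B. (if B \<in> G then ind (A \<noteq> B \<and> A \<inter> B \<noteq> {}) * p ^ card (A \<union> B) else 0)
          = ind ({A, B} \<subseteq> G) * (ind (A \<noteq> B \<and> A \<inter> B \<noteq> {}) * p ^ card (A \<union> B))"
        using True by (simp add: ind_def)
      then show ?thesis using True by simp
    next
      case False
      then show ?thesis by (simp add: ind_def)
    qed
  qed
  finally show ?thesis .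
qed

lemma ex_cmult_right: "ex p V (\<lambda>W. f W * c) = ex p V f * c"
  using ex_cmult[of p V c f] by (simp add: mult.commute)

lemma ex_exists_ge:
  assumes "finite H" "0 \<le> q" "q \<le> 1"
  shows "\<exists>G. G \<subseteq> H \<and> ex q H f \<le> f G"
proof -
  have fin: "finite (f ` Pow H)" using assms by simp
  have "Max (f ` Pow H) \<in> f ` Pow H" using fin by (intro Max_in) auto
  then obtain G where G: "G \<subseteq> H" "f G = Max (f ` Pow H)" by auto
  have "ex q H f \<le> ex q H (\<lambda>_. f G)"
    using assms G fin by (intro ex_mono) (auto intro!: Max_ge)
  also have "\<dots> = f G" using assms by (simp add: ex_const)
  finally show ?thesis using G by blast
qed

lemma sampling:
  assumes "finite H" "0 \<le> q" "q \<le> 1" "0 \<le> p" "\<And>A. A \<in> H \<Longrightarrow> True"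
  shows "\<exists>G. G \<subseteq> H \<and> a * q * mu_p p H - b * q^2 * D2 p H \<le> a * mu_p p G - b * D2 p G"
proof -
  obtain G where G: "G \<subseteq> H" "ex q H (\<lambda>G. a * mu_p p G - b * D2 p G) \<le> a * mu_p p G - b * D2 p G"
    using ex_exists_ge[OF assms(1-3)] by blast
  have e1: "ex q H (\<lambda>G. ind ({A} \<subseteq> G)) = q" if "A \<in> H" for A
    using prob_present[OF assms(1), of "{A}" q] that by simp
  have e2: "ex q H (\<lambda>G. ind ({A, B} \<subseteq> G)) * (ind (A \<noteq> B \<and> A \<inter> B \<noteq> {}) * p ^ card (A \<union> B))
      = q^2 * (ind (A \<noteq> B \<and> A \<inter> B \<noteq> {}) * p ^ card (A \<union> B))" if "A \<in> H" "B \<in> H" for A B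
  proof (cases "A = B")
    case True then show ?thesis by simp
  next
    case False
    then have "ex q H (\<lambda>G. ind ({A, B} \<subseteq> G)) = q ^ 2"
      using prob_present[OF assms(1), of "{A, B}" q] that by (simp add: power2_eq_square)
    then show ?thesis by simp
  qed
  have "ex q H (\<lambda>G. a * mu_p p G - b * D2 p G)
      = ex q H (\<lambda>G. a * (\<Sum>A\<in>H. ind ({A} \<subseteq> G) * p ^ card A)
          - b * (\<Sum>A\<in>H. \<Sum>B\<in>H. ind ({A, B} \<subseteq> G) * (ind (A \<noteq> B \<and> A \<inter> B \<noteq> {}) * p ^ card (A \<union> B))))"
    using assms(1) by (intro ex_cong) (simp add: mu_as_sum D2_as_sum)
  also have "\<dots> = a * (\<Sum>A\<in>H. ex q H (\<lambda>G. ind ({A} \<subseteq> G)) * p ^ card A)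
      - b * (\<Sum>A\<in>H. \<Sum>B\<in>H. ex q H (\<lambda>G. ind ({A, B} \<subseteq> G)) * (ind (A \<noteq> B \<and> A \<inter> B \<noteq> {}) * p ^ card (A \<union> B)))"
    unfolding ex_minus ex_cmult ex_sum
    by (simp only: ex_cmult_right)
  also have "\<dots> = a * q * mu_p p H - b * q^2 * D2 p H"
  proof -
    have s1: "(\<Sum>A\<in>H. ex q H (\<lambda>G. ind ({A} \<subseteq> G)) * p ^ card A) = q * mu_p p H"
      unfolding mu_p_def sum_distrib_left by (rule sum.cong[OF refl]) (simp only: e1)
    have s2: "(\<Sum>A\<in>H. \<Sum>B\<in>H. ex q H (\<lambda>G. ind ({A, B} \<subseteq> G)) * (ind (A \<noteq> B \<and> A \<inter> B \<noteq> {}) * p ^ card (A \<union> B))) = q^2 * D2 p H"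
      unfolding D2_def sum_distrib_left by (rule sum.cong[OF refl], rule sum.cong[OF refl]) (simp only: e2)
    show ?thesis unfolding s1 s2 by simp
  qed
  finally show ?thesis using G by auto
qed

lemma pmf_random_subset:
  assumes "finite V" "0 \<le> p" "p \<le> 1" "W \<subseteq> V"
  shows "pmf (random_subset V p) W = p ^ card W * (1-p) ^ card (V - W)"
proof -
  define Q where "Q = Pi_pmf V False (\<lambda>_. bernoulli_pmf p)"
  define g where "g = (\<lambda>b. {v \<in> V. b v})"
  define c where "c = (\<lambda>v. v \<in> W)"
  have setQ: "b x = False" if "b \<in> set_pmf Q" "x \<notin> V" for b x
    using set_Pi_pmf_subset[OF assms(1), of False "\<lambda>_. bernoulli_pmf p"] that unfolding Q_def by blast
  have "g -` {W} \<inter> set_pmf Q = {c} \<inter> set_pmf Q"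
  proof (intro equalityI subsetI)
    fix b assume b: "b \<in> g -` {W} \<inter> set_pmf Q"
    have "b x = c x" for x
    proof (cases "x \<in> V")
      case True then show ?thesis using b unfolding g_def c_def by auto
    next
      case False then show ?thesis using b setQ assms(4) unfolding c_def by auto
    qed
    then show "b \<in> {c} \<inter> set_pmf Q" using b by auto
  next
    fix b assume "b \<in> {c} \<inter> set_pmf Q"
    then show "b \<in> g -` {W} \<inter> set_pmf Q" using assms(4) unfolding g_def c_def by auto
  qed
  then have "pmf (random_subset V p) W = measure Q {c}"
    unfolding random_subset_def Q_def[symmetric] g_def[symmetric] pmf_map
    by (metis measure_Int_set_pmf)
  also have "\<dots> = (\<Prod>x\<in>V. pmf (bernoulli_pmf p) (c x))"
    unfolding measure_pmf_single Q_def using assms(1,4) by (subst pmf_Pi) (auto simp: c_def)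
  also have "\<dots> = (\<Prod>x\<in>V. if x \<in> W then p else 1 - p)"
    using assms by (intro prod.cong) (auto simp: c_def)
  also have "\<dots> = p ^ card W * (1-p) ^ card (V - W)"
    using assms by (simp add: prod.If_cases Int_absorb1 Diff_eq Int_commute)
  finally show ?thesis .
qed

lemma prob_ex:
  assumes "finite V" "0 \<le> p" "p \<le> 1"
  shows "measure_pmf.prob (random_subset V p) E = ex p V (\<lambda>W. ind (W \<in> E))"
proof -
  define M where "M = random_subset V p"
  have setM: "set_pmf M \<subseteq> Pow V" unfolding M_def random_subset_def by auto
  have "measure_pmf.prob M E = measure_pmf.prob M (E \<inter> set_pmf M)" by (simp add: measure_Int_set_pmf)
  also have "E \<inter> set_pmf M = (E \<inter> Pow V) \<inter> set_pmf M" using setM by auto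
  also have "measure_pmf.prob M \<dots> = measure_pmf.prob M (E \<inter> Pow V)" by (rule measure_Int_set_pmf)
  also have "\<dots> = (\<Sum>W\<in>E \<inter> Pow V. pmf M W)" using assms by (intro measure_measure_pmf_finite) auto
  also have "\<dots> = (\<Sum>W\<in>Pow V \<inter> E. p ^ card W * (1-p) ^ card (V - W))"
    unfolding M_def using assms by (intro sum.cong) (auto simp: pmf_random_subset)
  also have "\<dots> = ex p V (\<lambda>W. ind (W \<in> E))"
    unfolding ex_def using assms by (simp add: sum.inter_restrict ind_mult mult.commute)
  finally show ?thesis unfolding M_def .
qed

lemma pp_le:
  fixes p :: real
  assumes "0 \<le> p" "p \<le> 1" "finite A" "finite B"
  shows "p ^ card A * p ^ card B \<le> p ^ card (A \<union> B)"
proof -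
  have "card (A \<union> B) \<le> card A + card B" by (rule card_Un_le)
  then have "p ^ (card A + card B) \<le> p ^ card (A \<union> B)" using assms(1,2) by (rule power_decreasing)
  then show ?thesis by (simp add: power_add)
qed

lemma hub:
  assumes "finite G" "0 \<le> p" "p \<le> 1" "\<And>A. A \<in> G \<Longrightarrow> A \<noteq> {} \<and> finite A"
  defines "N \<equiv> (\<lambda>G A. \<Sum>B\<in>{B\<in>G. A \<inter> B \<noteq> {}}. p ^ card B)"
  defines "G2 \<equiv> {A\<in>G. N G A \<le> 4}"
  shows "G2 \<subseteq> G" "\<And>A. A \<in> G2 \<Longrightarrow> N G2 A \<le> 4"
    "mu_p p G - D2 p G / 3 \<le> mu_p p G2" "D2 p G2 \<le> D2 p G"
proof -
  show sub: "G2 \<subseteq> G" unfolding G2_def by auto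
  show "N G2 A \<le> 4" if "A \<in> G2" for A
  proof -
    have "N G2 A \<le> N G A" unfolding N_def using assms(1,2) sub by (intro sum_mono2) auto
    then show ?thesis using that unfolding G2_def by simp
  qed
  show "D2 p G2 \<le> D2 p G" by (rule D2_mono[OF sub assms(1,2)])
  define R where "R = G - G2"
  have N0: "N G A = p ^ card A + (\<Sum>B\<in>G. ind (A \<noteq> B \<and> A \<inter> B \<noteq> {}) * p ^ card B)" if "A \<in> G" for A
  proof -
    have "N G A = (\<Sum>B\<in>G. ind (A \<inter> B \<noteq> {}) * p ^ card B)"
      unfolding N_def using assms(1) by (simp add: sum.inter_filter ind_mult)
    also have "\<dots> = ind (A \<inter> A \<noteq> {}) * p ^ card A + (\<Sum>B\<in>G - {A}. ind (A \<inter> B \<noteq> {}) * p ^ card B)"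
      using that assms(1) by (simp add: sum.remove)
    also have "(\<Sum>B\<in>G - {A}. ind (A \<inter> B \<noteq> {}) * p ^ card B) = (\<Sum>B\<in>G. ind (A \<noteq> B \<and> A \<inter> B \<noteq> {}) * p ^ card B)"
    proof -
      have "(\<Sum>B\<in>G. ind (A \<noteq> B \<and> A \<inter> B \<noteq> {}) * p ^ card B) = (\<Sum>B\<in>G - {A}. ind (A \<noteq> B \<and> A \<inter> B \<noteq> {}) * p ^ card B)"
        using sum.remove[OF assms(1) that, of "\<lambda>B. ind (A \<noteq> B \<and> A \<inter> B \<noteq> {}) * p ^ card B"] by simp
      also have "\<dots> = (\<Sum>B\<in>G - {A}. ind (A \<inter> B \<noteq> {}) * p ^ card B)"
      proof (rule sum.cong[OF refl])
        fix x assume "x \<in> G - {A}"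
        then have "A \<noteq> x" by auto
        then show "ind (A \<noteq> x \<and> A \<inter> x \<noteq> {}) * p ^ card x = ind (A \<inter> x \<noteq> {}) * p ^ card x" by simp
      qed
      finally show ?thesis by (rule sym)
    qed
    finally show ?thesis using assms(4)[OF that] by simp
  qed
  have Rb: "p ^ card A \<le> (\<Sum>B\<in>G. ind (A \<noteq> B \<and> A \<inter> B \<noteq> {}) * p ^ card (A \<union> B)) / 3" if "A \<in> R" for A
  proof -
    have AG: "A \<in> G" "\<not> N G A \<le> 4" using that unfolding R_def G2_def by auto
    have pA: "0 \<le> p ^ card A" "p ^ card A \<le> 1" using assms(2,3) by (auto intro: power_le_one)
    define X where "X = (\<Sum>B\<in>G. ind (A \<noteq> B \<and> A \<inter> B \<noteq> {}) * p ^ card B)"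
    have "3 \<le> X" using N0[OF AG(1)] AG(2) pA unfolding X_def by linarith
    then have "3 * p ^ card A \<le> p ^ card A * X" using pA by (simp add: mult.commute mult_right_mono)
    also have "p ^ card A * X \<le> (\<Sum>B\<in>G. ind (A \<noteq> B \<and> A \<inter> B \<noteq> {}) * p ^ card (A \<union> B))"
      unfolding X_def sum_distrib_left
    proof (rule sum_mono)
      fix B assume "B \<in> G"
      then have "p ^ card A * p ^ card B \<le> p ^ card (A \<union> B)"
        using assms(2,3,4) AG(1) by (intro pp_le) auto
      then show "p ^ card A * (ind (A \<noteq> B \<and> A \<inter> B \<noteq> {}) * p ^ card B) \<le> ind (A \<noteq> B \<and> A \<inter> B \<noteq> {}) * p ^ card (A \<union> B)"
        by (simp add: ind_def)
    qed
    finally show ?thesis by simp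
  qed
  have "mu_p p G = mu_p p G2 + (\<Sum>A\<in>R. p ^ card A)"
    unfolding mu_p_def R_def using assms(1) sub by (simp add: sum.subset_diff[of G2 G])
  also have "(\<Sum>A\<in>R. p ^ card A) \<le> (\<Sum>A\<in>R. (\<Sum>B\<in>G. ind (A \<noteq> B \<and> A \<inter> B \<noteq> {}) * p ^ card (A \<union> B)) / 3)"
    using Rb by (rule sum_mono)
  also have "\<dots> \<le> (\<Sum>A\<in>G. (\<Sum>B\<in>G. ind (A \<noteq> B \<and> A \<inter> B \<noteq> {}) * p ^ card (A \<union> B)) / 3)"
    unfolding R_def using assms(1,2) by (intro sum_mono2 divide_nonneg_pos sum_nonneg mult_nonneg_nonneg) auto
  also have "\<dots> = D2 p G / 3" unfolding D2_def by (simp add: sum_divide_distrib)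
  finally show "mu_p p G - D2 p G / 3 \<le> mu_p p G2" by simp
qed

lemma exp_m2: "exp (-2::real) \<le> 4/25"
proof -
  have "(9/8::real) \<le> exp (1/8)" using exp_ge_add_one_self[of "1/8::real"] by simp
  then have "(9/8::real)^16 \<le> exp (1/8) ^ 16" by (intro power_mono) auto
  also have "exp (1/8::real) ^ 16 = exp 2" using exp_of_nat_mult[of 16 "1/8::real"] by simp
  moreover have "(25/4::real) \<le> (9/8)^16" by (simp add: power_divide)
  ultimately have "25/4 \<le> exp (2::real)" by linarith
  then show ?thesis by (simp add: exp_minus field_simps)
qed

lemma good_subfamily:
  assumes "finite H" "0 \<le> p"
  shows "\<exists>G. G \<subseteq> H \<and> (53/500) * Lambda_p p H \<le> (21/25) * mu_p p G - (39/50) * D2 p G"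
proof -
  define \<mu> where "\<mu> = mu_p p H"
  define \<Delta> where "\<Delta> = Delta_p p H"
  have D2H: "D2 p H = 2 * \<Delta>" unfolding \<Delta>_def by (rule D2_Delta[OF assms(1)])
  have \<Delta>0: "0 \<le> \<Delta>" using D2_nonneg[OF assms(2), of H] D2H by simp
  have \<mu>0: "0 \<le> \<mu>" unfolding \<mu>_def mu_p_def using assms by (simp add: sum_nonneg)
  have L1: "Lambda_p p H \<le> \<mu>" unfolding Lambda_p_def \<mu>_def by simp
  have L2: "Lambda_p p H \<le> \<mu>^2 / \<Delta>" if "\<Delta> \<noteq> 0" unfolding Lambda_p_def \<mu>_def using that \<Delta>_def by simp
  show ?thesis
  proof (cases "4 * (39/50) * \<Delta> \<le> (21/25) * \<mu>")
    case True
    have "(53/500) * Lambda_p p H \<le> (53/500) * \<mu>" using L1 by simp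
    also have "\<dots> \<le> (21/25) * mu_p p H - (39/50) * D2 p H" using True \<mu>0 D2H unfolding \<mu>_def by simp
    finally show ?thesis by blast
  next
    case False
    then have \<Delta>p: "0 < \<Delta>" using \<mu>0 \<Delta>0 by linarith
    define q where "q = (21/25) * \<mu> / (4 * (39/50) * \<Delta>)"
    have q0: "0 \<le> q" "q \<le> 1" unfolding q_def using \<Delta>p \<mu>0 False by (auto simp: field_simps)
    obtain G where G: "G \<subseteq> H" "(21/25) * q * mu_p p H - (39/50) * q^2 * D2 p H \<le> (21/25) * mu_p p G - (39/50) * D2 p G"
      using sampling[OF assms(1) q0 assms(2)] by blast
    have "(21/25) * q * mu_p p H - (39/50) * q^2 * D2 p H = (21/25)^2 * \<mu>^2 / (8 * (39/50) * \<Delta>)"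
      unfolding D2H \<mu>_def[symmetric] q_def using \<Delta>p by (simp add: field_simps power2_eq_square)
    moreover have "(53/500) * Lambda_p p H \<le> (21/25)^2 * \<mu>^2 / (8 * (39/50) * \<Delta>)"
    proof -
      have "(53/500) * Lambda_p p H \<le> (53/500) * (\<mu>^2 / \<Delta>)" using L2 \<Delta>p by simp
      also have "\<dots> \<le> (21/25)^2 * \<mu>^2 / (8 * (39/50) * \<Delta>)"
        using \<Delta>p by (simp add: field_simps)
      finally show ?thesis .
    qed
    ultimately have "(53/500) * Lambda_p p H \<le> (21/25) * mu_p p G - (39/50) * D2 p G" using G(2) by linarith
    then show ?thesis using G(1) by blast
  qed
qed

theorem mainTheorem4:
  fixes V :: "'a set" and H :: "'a set set" and p :: real
  assumes "finite V"
    and "\<And>A. A \<in> H \<Longrightarrow> A \<subseteq> V \<and> A \<noteq> {}"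
    and "0 \<le> p" and "p \<le> 1"
  shows "measure_pmf.prob (random_subset V p)
           {W. real (matching_number (induced H W)) \<le> Lambda_p p H / 1000}
         \<le> exp (- Lambda_p p H / 10)"
proof -
  define \<Lambda> where "\<Lambda> = Lambda_p p H"
  define t where "t = \<Lambda> / 1000"
  have finH: "finite H" using assms(1,2) by (intro finite_subset[of H "Pow V"]) auto
  have \<mu>0: "0 \<le> mu_p p H" unfolding mu_p_def using assms by (simp add: sum_nonneg)
  have \<Delta>0: "0 \<le> Delta_p p H" using D2_nonneg[OF assms(3), of H] D2_Delta[OF finH, of p] by simp
  have \<Lambda>0: "0 \<le> \<Lambda>" unfolding \<Lambda>_def Lambda_p_def using \<mu>0 \<Delta>0 by auto
  have t0: "0 \<le> t" unfolding t_def using \<Lambda>0 by simp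
  obtain G1 where G1: "G1 \<subseteq> H" "(53/500) * \<Lambda> \<le> (21/25) * mu_p p G1 - (39/50) * D2 p G1"
    using good_subfamily[OF finH assms(3)] unfolding \<Lambda>_def by blast
  have finG1: "finite G1" using finH G1(1) finite_subset by blast
  have G1e: "A \<noteq> {} \<and> finite A" if "A \<in> G1" for A
    using assms(1,2) G1(1) that finite_subset by blast
  define G2 where "G2 = {A\<in>G1. (\<Sum>B\<in>{B\<in>G1. A \<inter> B \<noteq> {}}. p ^ card B) \<le> 4}"
  note hb = hub[where G=G1 and p=p, OF finG1 assms(3,4) G1e, folded G2_def]
  have G2H: "G2 \<subseteq> H" using hb(1) G1(1) by blast
  have kap: "(\<Sum>B\<in>{B\<in>G2. A \<inter> B \<noteq> {}}. p ^ card B) \<le> 4" if "A \<in> G2" for A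
  proof -
    have triv: "\<And>A. A \<in> G1 \<Longrightarrow> A \<in> G1" by blast
    show ?thesis using hb(2)[OF triv that] .
  qed
  have s: "0 < exp (-6::real)" "exp (-6::real) \<le> 1" by auto
  have "measure_pmf.prob (random_subset V p) {W. real (matching_number (induced H W)) \<le> t}
      = ex p V (\<lambda>W. ind (real (matching_number (induced H W)) \<le> t))"
    using prob_ex[OF assms(1,3,4)] by simp
  also have "\<dots> \<le> exp (- mu_p p G2 + D2 p G2 / 2) * (exp (-6) powr (- t) * exp (exp (-6) * (exp 4 * mu_p p G2)))"
    using assms(2) by (intro union_bound[OF assms(1,3,4) finH _ G2H kap s t0]) auto
  also have "\<dots> = exp (- mu_p p G2 + D2 p G2 / 2 + 6 * t + exp (-2) * mu_p p G2)"
  proof -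
    have "exp (-6::real) powr (- t) = exp (6 * t)" by (simp add: powr_def)
    moreover have "exp (-6::real) * (exp 4 * mu_p p G2) = exp (-2) * mu_p p G2"
      by (simp add: mult.assoc[symmetric] exp_add[symmetric])
    ultimately show ?thesis by (simp add: exp_add)
  qed
  also have "\<dots> \<le> exp (- \<Lambda> / 10)"
  proof (subst exp_le_cancel_iff)
    have m2: "0 \<le> mu_p p G2" unfolding mu_p_def using assms by (simp add: sum_nonneg)
    have "exp (-2) * mu_p p G2 \<le> (4/25) * mu_p p G2" using exp_m2 m2 by (rule mult_right_mono)
    moreover have "0 \<le> D2 p G2" using D2_nonneg[OF assms(3)] .
    ultimately show "- mu_p p G2 + D2 p G2 / 2 + 6 * t + exp (-2) * mu_p p G2 \<le> - \<Lambda> / 10"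
      using hb(3,4) G1(2) unfolding t_def by linarith
  qed
  finally show ?thesis unfolding t_def \<Lambda>_def .
qed

end
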